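(* Let $(\Omega,\Sigma,\mathbb{P})$ be a probability space, let $\gamma<0$, and let $W_t:\Omega\to(0,\infty)$, $t\in\mathbb{N}$, be random variables with $E[W_t^\gamma]<\infty$ for all $t$. Define $$C:=\liminf_{t\to\infty}\frac{1}{t}\,\frac{1}{\gamma}\log\big(E[W_t^\gamma]\big).$$ Then $$\liminf_{t\to\infty}\frac{1}{t}\log W_t\geq C\quad\text{almost surely.}$$ Moreover, if $C>0$, then for every $b\in[0,\infty)$ the hitting time $T_b:=\inf\{t\in\mathbb{N}: W_t>b\}$ is integrable and $$\limsup_{b\to+\infty}\frac{E[T_b]}{\log b}\leq\frac{1}{C}.$$
   Context: $\log$ is the natural logarithm. $C$ takes values in $[-\infty,+\infty]$; if $C=+\infty$ then $1/C:=0$. *)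

theory Defs
  imports "HOL-Probability.Probability"
begin

text \<open>Hitting time T_b = inf {t \<in> \<nat>. W_t > b}, with inf of the empty set = +\<infinity>,
  as an ennreal-valued function (so integrability = finite nonnegative integral).\<close>
definition hitting_time :: "(nat \<Rightarrow> 'a \<Rightarrow> real) \<Rightarrow> real \<Rightarrow> 'a \<Rightarrow> ennreal" where
  "hitting_time W b \<omega> =
     (if \<exists>t. W t \<omega> > b then of_nat (LEAST t. W t \<omega> > b) else \<infinity>)"

end

theory Submission imports Defs begin

lemma hitting_sum:
  "hitting_time W b \<omega> = (\<Sum>t. indicator {\<omega>. \<forall>s\<le>t. W s \<omega> \<le> b} \<omega>)"
proof (cases "\<exists>t. W t \<omega> > b")
  case True
  define L where "L = (LEAST t. W t \<omega> > b)"
  have L: "W L \<omega> > b" using LeastI_ex[OF True] L_def by simp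
  have ind: "indicator {\<omega>. \<forall>s\<le>t. W s \<omega> \<le> b} \<omega> = (if t < L then 1 else (0::ennreal))" for t
  proof (cases "t < L")
    case True
    then have "\<forall>s\<le>t. W s \<omega> \<le> b" using not_less_Least L_def by (metis le_less_trans not_le)
    then show ?thesis using True by simp
  next
    case False
    then have "\<not> (\<forall>s\<le>t. W s \<omega> \<le> b)" using L by (auto simp: not_less)
    then show ?thesis using False by (simp add: indicator_def)
  qed
  have "(\<Sum>t. indicator {\<omega>. \<forall>s\<le>t. W s \<omega> \<le> b} \<omega>) = (\<Sum>t<L. (1::ennreal))"
    unfolding ind by (subst suminf_finite[of "{..<L}"]) auto
  then show ?thesis using True by (simp add: hitting_time_def L_def)
next
  case False
  have "(\<Sum>t. indicator {\<omega>. \<forall>s\<le>t. W s \<omega> \<le> b} \<omega>) = (\<Sum>t. (1::ennreal))"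
    using False by (simp add: not_less)
  also have "\<dots> = \<infinity>"
  proof -
    have "of_nat n \<le> (\<Sum>t. (1::ennreal))" for n
      using sum_le_suminf[of "\<lambda>_. (1::ennreal)" "{..<n}"] by simp
    then show ?thesis by (metis ennreal_Ex_less_of_nat not_le top.not_eq_extremum infinity_ennreal_def)
  qed
  finally show ?thesis using False by (simp add: hitting_time_def)
qed

lemma geo_bound:
  fixes \<alpha> X :: real assumes a: "\<alpha> > 0" and X: "X \<ge> 1"
  shows "summable (\<lambda>t. min 1 (X * exp (-\<alpha> * real t)))"
    and "(\<Sum>t. min 1 (X * exp (-\<alpha> * real t))) \<le> ln X / \<alpha> + 1 + 1 / (1 - exp (-\<alpha>))"
proof -
  define q where "q = exp (-\<alpha>)"
  have q: "0 < q" "q < 1" using a by (auto simp: q_def)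
  have e: "exp (-\<alpha> * real t) = q ^ t" for t
    unfolding q_def by (metis exp_of_nat_mult mult.commute)
  define f where "f t = min 1 (X * exp (-\<alpha> * real t))" for t
  have sg: "summable (\<lambda>t. X * q ^ t)" using q by (intro summable_mult summable_geometric) auto
  show sf: "summable (\<lambda>t. min 1 (X * exp (-\<alpha> * real t)))"
  proof (rule summable_comparison_test[OF _ sg])
    have "norm (min 1 (X * exp (-\<alpha> * real n))) \<le> X * q ^ n" for n
      unfolding e[symmetric] using X by auto
    then show "\<exists>N. \<forall>n\<ge>N. norm (min 1 (X * exp (-\<alpha> * real n))) \<le> X * q ^ n" by blast
  qed
  define N where "N = nat \<lceil>ln X / \<alpha>\<rceil>"
  have lnX: "ln X \<ge> 0" using X by simp
  have y0: "ln X / \<alpha> \<ge> 0" using lnX a by simp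
  have NN: "real N = real_of_int \<lceil>ln X / \<alpha>\<rceil>" unfolding N_def using y0 by simp
  have N1: "real N \<le> ln X / \<alpha> + 1" unfolding NN by linarith
  have N2: "ln X / \<alpha> \<le> real N" unfolding NN by linarith
  have XN: "X * q ^ N \<le> 1"
  proof -
    have "ln X \<le> \<alpha> * real N" using N2 a by (simp add: field_simps)
    then have "X \<le> exp (\<alpha> * real N)" using X by (metis exp_ln exp_le_cancel_iff less_le_trans zero_less_one)
    moreover have "exp (\<alpha> * real N) * q ^ N = 1" using e[of N] by (metis exp_add exp_zero add.commute mult_minus_left neg_eq_iff_add_eq_0)
    ultimately show ?thesis using q by (metis mult_right_mono zero_le_power less_imp_le)
  qed
  have "(\<Sum>t. f t) = (\<Sum>t. f (t + N)) + (\<Sum>i<N. f i)"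
    using sf unfolding f_def by (rule suminf_split_initial_segment)
  also have "(\<Sum>i<N. f i) \<le> real N"
    using sum_bounded_above[of "{..<N}" f 1] by (simp add: f_def)
  also have "(\<Sum>t. f (t + N)) \<le> (\<Sum>t. q ^ t)"
  proof (rule suminf_le)
    fix t
    have "f (t + N) \<le> X * q ^ (t + N)" unfolding f_def e[symmetric] by (rule min.cobounded2)
    also have "\<dots> = (X * q ^ N) * q ^ t" by (simp add: power_add)
    also have "\<dots> \<le> q ^ t" using XN q by (simp add: mult_left_le_one_le)
    finally show "f (t + N) \<le> q ^ t" .
  next
    show "summable (\<lambda>t. f (t + N))" using sf unfolding f_def by (subst summable_iff_shift)
    show "summable (\<lambda>t. q ^ t)" using q by (intro summable_geometric) auto
  qed
  also have "(\<Sum>t. q ^ t) = 1 / (1 - q)" using q by (simp add: suminf_geometric)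
  finally show "(\<Sum>t. min 1 (X * exp (-\<alpha> * real t))) \<le> ln X / \<alpha> + 1 + 1 / (1 - exp (-\<alpha>))"
    using N1 unfolding f_def q_def by linarith
qed

context
  fixes M :: "'a measure" and \<gamma> :: real and W :: "nat \<Rightarrow> 'a \<Rightarrow> real"
  assumes P: "prob_space M"
    and g: "\<gamma> < 0"
    and meas[measurable]: "\<And>t. W t \<in> borel_measurable M"
    and pos: "\<And>t \<omega>. \<omega> \<in> space M \<Longrightarrow> W t \<omega> > 0"
    and int: "\<And>t. integrable M (\<lambda>\<omega>. W t \<omega> powr \<gamma>)"
begin

lemma m_pos: "(\<integral>\<omega>. W t \<omega> powr \<gamma> \<partial>M) > 0"
proof -
  have nn: "AE \<omega> in M. 0 \<le> W t \<omega> powr \<gamma>" by simp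
  have ge: "(\<integral>\<omega>. W t \<omega> powr \<gamma> \<partial>M) \<ge> 0" by (rule integral_nonneg_AE[OF nn])
  have "(\<integral>\<omega>. W t \<omega> powr \<gamma> \<partial>M) \<noteq> 0"
  proof
    assume "(\<integral>\<omega>. W t \<omega> powr \<gamma> \<partial>M) = 0"
    then have "AE \<omega> in M. W t \<omega> powr \<gamma> = 0"
      using integral_nonneg_eq_0_iff_AE[OF int nn] by simp
    moreover have "AE \<omega> in M. W t \<omega> powr \<gamma> \<noteq> 0" using pos by (intro AE_I2) (metis powr_gt_zero less_irrefl)
    ultimately have "AE \<omega> in M. False" by eventually_elim auto
    then show False using prob_space.AE_False[OF P] by simp
  qed
  then show ?thesis using ge by linarith
qed

lemma markov:
  assumes B: "B > 0"
  shows "measure M {\<omega>\<in>space M. W t \<omega> \<le> B} \<le> (\<integral>\<omega>. W t \<omega> powr \<gamma> \<partial>M) * B powr (-\<gamma>)"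
proof -
  have "{\<omega>\<in>space M. W t \<omega> \<le> B} = {\<omega>\<in>space M. W t \<omega> powr \<gamma> \<ge> B powr \<gamma>}"
  proof (intro Collect_cong conj_cong refl iffI)
    fix \<omega> assume "\<omega> \<in> space M" "W t \<omega> \<le> B"
    then show "W t \<omega> powr \<gamma> \<ge> B powr \<gamma>" using powr_mono2'[of \<gamma> "W t \<omega>" B] g pos by auto
  next
    fix \<omega> assume "\<omega> \<in> space M" "W t \<omega> powr \<gamma> \<ge> B powr \<gamma>"
    then show "W t \<omega> \<le> B" using powr_less_mono2_neg[OF g B, of "W t \<omega>"] by (auto simp: not_le[symmetric])
  qed
  also have "measure M \<dots> \<le> (\<integral>\<omega>. W t \<omega> powr \<gamma> \<partial>M) / B powr \<gamma>"
    by (rule integral_Markov_inequality_measure[OF int]) (use B in auto)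
  also have "\<dots> = (\<integral>\<omega>. W t \<omega> powr \<gamma> \<partial>M) * B powr (-\<gamma>)"
    by (simp add: powr_minus divide_inverse)
  finally show ?thesis .
qed

lemma eventually_m:
  assumes c: "ereal c < liminf (\<lambda>t. ereal (1 / real t * (1 / \<gamma>) * ln (\<integral>\<omega>. W t \<omega> powr \<gamma> \<partial>M)))"
  shows "eventually (\<lambda>t. (\<integral>\<omega>. W t \<omega> powr \<gamma> \<partial>M) \<le> exp (c * \<gamma> * real t)) sequentially"
proof -
  have "eventually (\<lambda>t. ereal c < ereal (1 / real t * (1 / \<gamma>) * ln (\<integral>\<omega>. W t \<omega> powr \<gamma> \<partial>M))) sequentially"
    by (rule less_LiminfD[OF c])
  moreover have "eventually (\<lambda>t. t > (0::nat)) sequentially" by (rule eventually_gt_at_top)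
  ultimately show ?thesis
  proof eventually_elim
    case (elim t)
    define m where "m = (\<integral>\<omega>. W t \<omega> powr \<gamma> \<partial>M)"
    have tg: "real t * \<gamma> < 0" using elim g by (simp add: mult_pos_neg)
    have "c < ln m / (real t * \<gamma>)" using elim unfolding m_def by simp
    then have "ln m < c * (real t * \<gamma>)" using neg_less_divide_eq[OF tg] by simp
    then have "m < exp (c * \<gamma> * real t)"
      using m_pos[of t] unfolding m_def[symmetric] by (metis exp_less_cancel_iff exp_ln mult.assoc mult.commute)
    then show ?case unfolding m_def by simp
  qed
qed

lemma K_bound:
  assumes c: "ereal c < liminf (\<lambda>t. ereal (1 / real t * (1 / \<gamma>) * ln (\<integral>\<omega>. W t \<omega> powr \<gamma> \<partial>M)))"
  shows "\<exists>K\<ge>1. \<forall>t. (\<integral>\<omega>. W t \<omega> powr \<gamma> \<partial>M) \<le> K * exp (c * \<gamma> * real t)"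
proof -
  obtain N where N: "\<And>t. t \<ge> N \<Longrightarrow> (\<integral>\<omega>. W t \<omega> powr \<gamma> \<partial>M) \<le> exp (c * \<gamma> * real t)"
    using eventually_m[OF c] unfolding eventually_sequentially by blast
  define K where "K = max 1 (Max ((\<lambda>t. (\<integral>\<omega>. W t \<omega> powr \<gamma> \<partial>M) / exp (c * \<gamma> * real t)) ` {..N}))"
  have "(\<integral>\<omega>. W t \<omega> powr \<gamma> \<partial>M) \<le> K * exp (c * \<gamma> * real t)" for t
  proof (cases "t \<le> N")
    case True
    then have "(\<integral>\<omega>. W t \<omega> powr \<gamma> \<partial>M) / exp (c * \<gamma> * real t) \<le> K"
      unfolding K_def by (intro max.coboundedI2 Max_ge) auto
    then show ?thesis by (simp add: divide_le_eq)
  next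
    case False
    then have "(\<integral>\<omega>. W t \<omega> powr \<gamma> \<partial>M) \<le> 1 * exp (c * \<gamma> * real t)" using N by simp
    also have "\<dots> \<le> K * exp (c * \<gamma> * real t)" unfolding K_def by (intro mult_right_mono) auto
    finally show ?thesis .
  qed
  moreover have "K \<ge> 1" unfolding K_def by simp
  ultimately show ?thesis by blast
qed

lemma AE_ev:
  assumes qr: "q < r"
    and c: "ereal r < liminf (\<lambda>t. ereal (1 / real t * (1 / \<gamma>) * ln (\<integral>\<omega>. W t \<omega> powr \<gamma> \<partial>M)))"
  shows "AE \<omega> in M. eventually (\<lambda>t. q * real t \<le> ln (W t \<omega>)) sequentially"
proof -
  interpret prob_space M by (rule P)
  define A where "A t = {\<omega>\<in>space M. ln (W t \<omega>) < q * real t}" for t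
  have Am[measurable]: "A t \<in> sets M" for t unfolding A_def by measurable
  obtain N where N: "\<And>t. t \<ge> N \<Longrightarrow> (\<integral>\<omega>. W t \<omega> powr \<gamma> \<partial>M) \<le> exp (r * \<gamma> * real t)"
    using eventually_m[OF c] unfolding eventually_sequentially by blast
  have bound: "norm (measure M (A t)) \<le> exp (\<gamma> * (r - q)) ^ t" if "t \<ge> N" for t
  proof -
    have "A t \<subseteq> {\<omega>\<in>space M. W t \<omega> \<le> exp (q * real t)}"
    proof
      fix \<omega> assume "\<omega> \<in> A t"
      then have o: "\<omega> \<in> space M" "ln (W t \<omega>) < q * real t" unfolding A_def by auto
      then have "exp (ln (W t \<omega>)) < exp (q * real t)" by simp
      then have "W t \<omega> < exp (q * real t)" using pos[OF o(1), of t] by simp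
      then show "\<omega> \<in> {\<omega>\<in>space M. W t \<omega> \<le> exp (q * real t)}" using o by simp
    qed
    then have "measure M (A t) \<le> measure M {\<omega>\<in>space M. W t \<omega> \<le> exp (q * real t)}"
      by (intro finite_measure_mono) auto
    also have "\<dots> \<le> (\<integral>\<omega>. W t \<omega> powr \<gamma> \<partial>M) * exp (q * real t) powr (-\<gamma>)"
      by (rule markov) simp
    also have "\<dots> \<le> exp (r * \<gamma> * real t) * exp (q * real t) powr (-\<gamma>)"
      using N[OF that] by (intro mult_right_mono) auto
    also have "\<dots> = exp (\<gamma> * (r - q)) ^ t"
    proof -
      have "exp (q * real t) powr (-\<gamma>) = exp (-\<gamma> * q * real t)" by (simp add: powr_def)
      moreover have "exp (r * \<gamma> * real t) * exp (-\<gamma> * q * real t) = exp (real t * (\<gamma> * (r - q)))"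
        by (simp add: mult_exp_exp algebra_simps)
      ultimately show ?thesis by (simp add: exp_of_nat_mult)
    qed
    finally show ?thesis by simp
  qed
  have "summable (\<lambda>t. measure M (A t))"
  proof (rule summable_comparison_test)
    show "\<exists>N. \<forall>t\<ge>N. norm (measure M (A t)) \<le> exp (\<gamma> * (r - q)) ^ t" using bound by blast
    show "summable (\<lambda>t. exp (\<gamma> * (r - q)) ^ t)"
      using g qr by (intro summable_geometric) (simp add: mult_neg_pos)
  qed
  then have "AE \<omega> in M. eventually (\<lambda>t. \<omega> \<in> space M - A t) sequentially"
    by (intro borel_cantelli_AE1) (auto simp: emeasure_eq_measure)
  then show ?thesis
  proof (rule AE_mp, intro AE_I2 impI)
    fix \<omega> assume "\<omega> \<in> space M" and ev: "eventually (\<lambda>t. \<omega> \<in> space M - A t) sequentially"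
    show "eventually (\<lambda>t. q * real t \<le> ln (W t \<omega>)) sequentially"
      using ev by (rule eventually_mono) (simp add: A_def not_less)
  qed
qed

lemma part1:
  "AE \<omega> in M. liminf (\<lambda>t. ereal (1 / real t * ln (W t \<omega>)))
      \<ge> liminf (\<lambda>t. ereal (1 / real t * (1 / \<gamma>) * ln (\<integral>\<omega>. W t \<omega> powr \<gamma> \<partial>M)))"
  (is "AE \<omega> in M. ?L \<omega> \<ge> ?C")
proof -
  let ?X = "\<rat> \<times> \<rat>"
  have cX: "countable ?X" by (intro countable_SIGMA countable_rat)
  have "AE \<omega> in M. \<forall>p\<in>?X. fst p < snd p \<and> ereal (snd p) < ?C \<longrightarrow>
           eventually (\<lambda>t. fst p * real t \<le> ln (W t \<omega>)) sequentially"
    using cX by (subst AE_ball_countable) (auto intro: AE_ev)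
  then show ?thesis
  proof (rule AE_mp, intro AE_I2 impI)
    fix \<omega> assume H: "\<forall>p\<in>?X. fst p < snd p \<and> ereal (snd p) < ?C \<longrightarrow>
           eventually (\<lambda>t. fst p * real t \<le> ln (W t \<omega>)) sequentially"
    show "?L \<omega> \<ge> ?C"
    proof (rule ccontr)
      assume "\<not> ?L \<omega> \<ge> ?C"
      then have "?L \<omega> < ?C" by simp
      then obtain z1 where z1: "?L \<omega> < ereal z1" "ereal z1 < ?C" using ereal_dense2 by blast
      then obtain z2 where z2: "ereal z1 < ereal z2" "ereal z2 < ?C" using ereal_dense2 by blast
      then have "z1 < z2" by simp
      then obtain q where q: "q \<in> \<rat>" "z1 < q" "q < z2" using Rats_dense_in_real by blast
      then obtain r where r: "r \<in> \<rat>" "q < r" "r < z2" using Rats_dense_in_real by blast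
      have "ereal r < ereal z2" using r by simp
      then have rC: "ereal r < ?C" using z2(2) by (rule order.strict_trans)
      have ev: "eventually (\<lambda>t. q * real t \<le> ln (W t \<omega>)) sequentially"
        using H q r rC by auto
      have "eventually (\<lambda>t. ereal q \<le> ereal (1 / real t * ln (W t \<omega>))) sequentially"
        using ev eventually_gt_at_top[of "0::nat"]
      proof eventually_elim
        case (elim t)
        then show ?case by (simp add: field_simps)
      qed
      then have "ereal q \<le> ?L \<omega>" by (rule Liminf_bounded)
      moreover have "ereal z1 < ereal q" using q by simp
      then have "?L \<omega> < ereal q" using z1(1) by (metis order.strict_trans)
      ultimately show False by simp
    qed
  qed
qed

lemma hit_meas: "hitting_time W b \<in> borel_measurable M"
proof -
  have "hitting_time W b = (\<lambda>\<omega>. \<Sum>t. indicator {\<omega>. \<forall>s\<le>t. W s \<omega> \<le> b} \<omega>)"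
    by (rule ext, rule hitting_sum)
  also have "\<dots> \<in> borel_measurable M" by measurable
  finally show ?thesis .
qed

lemma part2_bound:
  assumes c0: "c > 0"
    and c: "ereal c < liminf (\<lambda>t. ereal (1 / real t * (1 / \<gamma>) * ln (\<integral>\<omega>. W t \<omega> powr \<gamma> \<partial>M)))"
  shows "\<exists>D\<ge>0. \<forall>b\<ge>0. (\<integral>\<^sup>+ \<omega>. hitting_time W b \<omega> \<partial>M) \<le> ennreal (ln (max b 1) / c + D)"
proof -
  interpret prob_space M by (rule P)
  obtain K where K1: "K \<ge> 1" and K: "\<And>t. (\<integral>\<omega>. W t \<omega> powr \<gamma> \<partial>M) \<le> K * exp (c * \<gamma> * real t)"
    using K_bound[OF c] by blast
  define \<alpha> where "\<alpha> = - c * \<gamma>"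
  have a0: "\<alpha> > 0" unfolding \<alpha>_def using c0 g by (simp add: mult_pos_neg)
  define D where "D = ln K / \<alpha> + 1 + 1 / (1 - exp (-\<alpha>))"
  have "(\<integral>\<^sup>+ \<omega>. hitting_time W b \<omega> \<partial>M) \<le> ennreal (ln (max b 1) / c + D)" if b0: "b \<ge> 0" for b
  proof -
    define B where "B = max b 1"
    have B1: "B \<ge> 1" unfolding B_def by simp
    define Y where "Y = B powr (-\<gamma>)"
    have Y1: "Y \<ge> 1" unfolding Y_def using B1 g by (intro ge_one_powr_ge_zero) auto
    define X where "X = K * Y"
    have X1: "X \<ge> 1" unfolding X_def using mult_mono[OF K1 Y1] K1 by simp
    define A where "A t = {\<omega>\<in>space M. \<forall>s\<le>t. W s \<omega> \<le> b}" for t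
    have Am[measurable]: "A t \<in> sets M" for t unfolding A_def by measurable
    have "(\<integral>\<^sup>+ \<omega>. hitting_time W b \<omega> \<partial>M) = (\<integral>\<^sup>+ \<omega>. (\<Sum>t. indicator (A t) \<omega>) \<partial>M)"
      by (intro nn_integral_cong) (simp add: hitting_sum A_def indicator_def)
    also have "\<dots> = (\<Sum>t. emeasure M (A t))"
      by (subst nn_integral_suminf) auto
    also have "\<dots> \<le> (\<Sum>t. ennreal (min 1 (X * exp (-\<alpha> * real t))))"
    proof (intro suminf_le summableI)
      fix t
      have "measure M (A t) \<le> measure M {\<omega>\<in>space M. W t \<omega> \<le> B}"
        by (intro finite_measure_mono) (auto simp: A_def B_def)
      also have "\<dots> \<le> (\<integral>\<omega>. W t \<omega> powr \<gamma> \<partial>M) * Y"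
        unfolding Y_def using B1 by (intro markov) auto
      also have "\<dots> \<le> K * exp (c * \<gamma> * real t) * Y"
        using K[of t] Y1 by (intro mult_right_mono) auto
      also have "\<dots> = X * exp (-\<alpha> * real t)" unfolding X_def \<alpha>_def by simp
      finally have "measure M (A t) \<le> min 1 (X * exp (-\<alpha> * real t))" by simp
      then show "emeasure M (A t) \<le> ennreal (min 1 (X * exp (-\<alpha> * real t)))"
        by (simp add: emeasure_eq_measure ennreal_leI)
    qed
    also have "\<dots> = ennreal (\<Sum>t. min 1 (X * exp (-\<alpha> * real t)))"
      using geo_bound(1)[OF a0 X1] X1 by (intro suminf_ennreal2) auto
    also have "\<dots> \<le> ennreal (ln X / \<alpha> + 1 + 1 / (1 - exp (-\<alpha>)))"
      by (intro ennreal_leI geo_bound(2)[OF a0 X1])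
    also have "ln X / \<alpha> = ln (max b 1) / c + ln K / \<alpha>"
    proof -
      have "ln X = ln K + (-\<gamma>) * ln B" unfolding X_def Y_def using K1 B1 by (simp add: ln_mult)
      then show ?thesis unfolding \<alpha>_def B_def using c0 g by (simp add: field_simps)
    qed
    finally show ?thesis unfolding D_def by (simp add: add.assoc)
  qed
  moreover have "D \<ge> 0"
  proof -
    have "exp (-\<alpha>) < 1" using a0 by simp
    then have "1 / (1 - exp (-\<alpha>)) > 0" by simp
    moreover have "ln K / \<alpha> \<ge> 0" using K1 a0 by simp
    ultimately show ?thesis unfolding D_def by linarith
  qed
  ultimately show ?thesis by blast
qed

end


theorem theorem3:
  fixes M :: "'a measure" and \<gamma> :: real and W :: "nat \<Rightarrow> 'a \<Rightarrow> real" and C :: ereal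
  assumes "prob_space M"
    and "\<gamma> < 0"
    and "\<And>t. W t \<in> borel_measurable M"
    and "\<And>t \<omega>. \<omega> \<in> space M \<Longrightarrow> W t \<omega> > 0"
    and "\<And>t. integrable M (\<lambda>\<omega>. W t \<omega> powr \<gamma>)"
    and C_def: "C = liminf (\<lambda>t. ereal (1 / real t * (1 / \<gamma>) * ln (\<integral>\<omega>. W t \<omega> powr \<gamma> \<partial>M)))"
  shows "(AE \<omega> in M. liminf (\<lambda>t. ereal (1 / real t * ln (W t \<omega>))) \<ge> C) \<and>
         (C > 0 \<longrightarrow>
           (\<forall>b\<ge>0. hitting_time W b \<in> borel_measurable M \<and>
                   (\<integral>\<^sup>+ \<omega>. hitting_time W b \<omega> \<partial>M) < \<infinity>) \<and>
           Limsup at_top (\<lambda>b::real. ereal (enn2real (\<integral>\<^sup>+ \<omega>. hitting_time W b \<omega> \<partial>M) / ln b))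
             \<le> inverse C)"
proof (intro conjI impI)
  note A = assms(1-5)
  show "AE \<omega> in M. liminf (\<lambda>t. ereal (1 / real t * ln (W t \<omega>))) \<ge> C"
    unfolding C_def by (rule part1[OF A])
  assume C0: "C > 0"
  obtain c0 where c0: "0 < ereal c0" "ereal c0 < C" using ereal_dense2[OF C0] by blast
  have c0p: "c0 > 0" using c0 by simp
  have c0C: "ereal c0 < liminf (\<lambda>t. ereal (1 / real t * (1 / \<gamma>) * ln (\<integral>\<omega>. W t \<omega> powr \<gamma> \<partial>M)))"
    using c0 C_def by simp
  obtain D0 where "\<forall>b\<ge>0. (\<integral>\<^sup>+ \<omega>. hitting_time W b \<omega> \<partial>M) \<le> ennreal (ln (max b 1) / c0 + D0)"
    using part2_bound[OF A c0p c0C] by auto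
  then show "\<forall>b\<ge>0. hitting_time W b \<in> borel_measurable M \<and>
                   (\<integral>\<^sup>+ \<omega>. hitting_time W b \<omega> \<partial>M) < \<infinity>"
    using hit_meas[OF A] by (auto intro: le_less_trans)
  define L where "L = Limsup at_top (\<lambda>b::real. ereal (enn2real (\<integral>\<^sup>+ \<omega>. hitting_time W b \<omega> \<partial>M) / ln b))"
  have key: "L \<le> ereal (1 / c)" if cpos: "c > 0" and cC: "ereal c < C" for c
  proof -
    have cC': "ereal c < liminf (\<lambda>t. ereal (1 / real t * (1 / \<gamma>) * ln (\<integral>\<omega>. W t \<omega> powr \<gamma> \<partial>M)))"
      using cC C_def by simp
    obtain D where D0: "D \<ge> 0" and D: "\<And>b. b \<ge> 0 \<Longrightarrow> (\<integral>\<^sup>+ \<omega>. hitting_time W b \<omega> \<partial>M) \<le> ennreal (ln (max b 1) / c + D)"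
      using part2_bound[OF A cpos cC'] by auto
    show ?thesis unfolding L_def
    proof (rule ereal_le_epsilon2)
      fix e :: real assume e: "e > 0"
      have "eventually (\<lambda>b::real. ereal (enn2real (\<integral>\<^sup>+ \<omega>. hitting_time W b \<omega> \<partial>M) / ln b) \<le> ereal (1 / c) + ereal e) at_top"
        using eventually_ge_at_top[of "exp (D / e + 1)"]
      proof eventually_elim
        case (elim b)
        have "exp (D / e + 1) \<ge> 1" using D0 e by simp
        then have b1: "b \<ge> 1" using elim by linarith
        have lnb: "ln b \<ge> D / e + 1" using elim by (metis exp_gt_zero exp_le_cancel_iff exp_ln less_le_trans)
        then have lnb0: "ln b > 0" using D0 e by (smt (verit) divide_nonneg_pos)
        have "enn2real (\<integral>\<^sup>+ \<omega>. hitting_time W b \<omega> \<partial>M) \<le> ln b / c + D"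
          using D[of b] b1 D0 cpos lnb0 by (intro enn2real_leI) (auto simp: max_def)
        then have "enn2real (\<integral>\<^sup>+ \<omega>. hitting_time W b \<omega> \<partial>M) / ln b \<le> (ln b / c + D) / ln b"
          using lnb0 by (simp add: divide_right_mono)
        also have "\<dots> = 1 / c + D / ln b" using lnb0 by (simp add: field_simps)
        also have "D / ln b \<le> e"
        proof -
          have "D \<le> e * ln b" using lnb e by (simp add: field_simps)
          then show ?thesis using lnb0 by (simp add: divide_le_eq mult.commute)
        qed
        finally show ?case by simp
      qed
      then show "Limsup at_top (\<lambda>b::real. ereal (enn2real (\<integral>\<^sup>+ \<omega>. hitting_time W b \<omega> \<partial>M) / ln b)) \<le> ereal (1 / c) + ereal e"
        by (rule Limsup_bounded)
    qed
  qed
  show "L \<le> inverse C"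
  proof (rule ccontr)
    assume "\<not> L \<le> inverse C"
    then have "inverse C < L" by simp
    then obtain y where y: "inverse C < ereal y" "ereal y < L" using ereal_dense2 by blast
    have "inverse C \<ge> 0" using C0 by (simp add: ereal_inverse_nonneg_iff less_imp_le)
    then have y0: "y > 0" using y(1) by (metis ereal_less(2) order_le_less_trans zero_ereal_def)
    have "ereal (1 / y) < C"
    proof (cases C)
      case (real r)
      then have "r > 0" using C0 by simp
      then have "1 / r < y" using y(1) real by (simp add: inverse_eq_divide)
      then have "1 / y < r" using \<open>r > 0\<close> y0 by (simp add: field_simps)
      then show ?thesis using real by simp
    next
      case PInf then show ?thesis by simp
    next
      case MInf then show ?thesis using C0 by simp
    qed
    then have "L \<le> ereal (1 / (1 / y))" using y0 by (intro key) auto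
    then show False using y(2) by simp
  qed
qed

end
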